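(* Let $G$ be a connected diamond-free graph in which every induced $P_4$ is settled. Then either $G$ is complete bipartite, or every edge $uv\in E(G)$ such that $\{u,v\}$ is a maximal clique of $G$ is a simplicial clique of $G$.
   Context: An induced $P_4$ $(a,b,c,d)$ (path $a-b-c-d$, induced) is settled if $G$ has a vertex adjacent to both $b$ and $c$ and non-adjacent to both $a$ and $d$. A vertex $v$ is simplicial if $N[v]$ is a clique; a clique is simplicial if it equals $N[v]$ for some simplicial vertex $v$. The diamond is $K_4$ minus one edge; diamond-free means no induced diamond. *)

theory Defs
  imports Main
begin

definition simple_graph :: "'a set \<Rightarrow> ('a \<Rightarrow> 'a \<Rightarrow> bool) \<Rightarrow> bool" where
  "simple_graph V E \<longleftrightarrow> finite V \<and> (\<forall>x y. E x y \<longrightarrow> x \<in> V \<and> y \<in> V) \<and>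
     (\<forall>x y. E x y \<longrightarrow> E y x) \<and> (\<forall>x. \<not> E x x)"

definition connected_graph :: "'a set \<Rightarrow> ('a \<Rightarrow> 'a \<Rightarrow> bool) \<Rightarrow> bool" where
  "connected_graph V E \<longleftrightarrow> (\<forall>x\<in>V. \<forall>y\<in>V. E\<^sup>*\<^sup>* x y)"

definition induced_P4 :: "'a set \<Rightarrow> ('a \<Rightarrow> 'a \<Rightarrow> bool) \<Rightarrow> 'a \<Rightarrow> 'a \<Rightarrow> 'a \<Rightarrow> 'a \<Rightarrow> bool" where
  "induced_P4 V E a b c d \<longleftrightarrow> a \<in> V \<and> b \<in> V \<and> c \<in> V \<and> d \<in> V \<and>
     distinct [a, b, c, d] \<and> E a b \<and> E b c \<and> E c d \<and> \<not> E a c \<and> \<not> E a d \<and> \<not> E b d"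

definition settled :: "'a set \<Rightarrow> ('a \<Rightarrow> 'a \<Rightarrow> bool) \<Rightarrow> 'a \<Rightarrow> 'a \<Rightarrow> 'a \<Rightarrow> 'a \<Rightarrow> bool" where
  "settled V E a b c d \<longleftrightarrow> (\<exists>v\<in>V. E v b \<and> E v c \<and> \<not> E v a \<and> \<not> E v d)"

definition diamond_free :: "'a set \<Rightarrow> ('a \<Rightarrow> 'a \<Rightarrow> bool) \<Rightarrow> bool" where
  "diamond_free V E \<longleftrightarrow> \<not> (\<exists>a\<in>V. \<exists>b\<in>V. \<exists>c\<in>V. \<exists>d\<in>V. distinct [a, b, c, d] \<and>
     E a b \<and> E a c \<and> E b c \<and> E b d \<and> E c d \<and> \<not> E a d)"

definition complete_bipartite :: "'a set \<Rightarrow> ('a \<Rightarrow> 'a \<Rightarrow> bool) \<Rightarrow> bool" where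
  "complete_bipartite V E \<longleftrightarrow> (\<exists>A B. A \<union> B = V \<and> A \<inter> B = {} \<and> A \<noteq> {} \<and> B \<noteq> {} \<and>
     (\<forall>x\<in>V. \<forall>y\<in>V. E x y \<longleftrightarrow> (x \<in> A \<and> y \<in> B) \<or> (x \<in> B \<and> y \<in> A)))"

definition is_clique :: "'a set \<Rightarrow> ('a \<Rightarrow> 'a \<Rightarrow> bool) \<Rightarrow> 'a set \<Rightarrow> bool" where
  "is_clique V E K \<longleftrightarrow> K \<subseteq> V \<and> (\<forall>x\<in>K. \<forall>y\<in>K. x \<noteq> y \<longrightarrow> E x y)"

definition maximal_clique :: "'a set \<Rightarrow> ('a \<Rightarrow> 'a \<Rightarrow> bool) \<Rightarrow> 'a set \<Rightarrow> bool" where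
  "maximal_clique V E K \<longleftrightarrow> is_clique V E K \<and> (\<forall>K'. is_clique V E K' \<and> K \<subseteq> K' \<longrightarrow> K' = K)"

definition closed_nbhd :: "('a \<Rightarrow> 'a \<Rightarrow> bool) \<Rightarrow> 'a \<Rightarrow> 'a set" where
  "closed_nbhd E v = insert v {u. E v u}"

definition simplicial_vertex :: "'a set \<Rightarrow> ('a \<Rightarrow> 'a \<Rightarrow> bool) \<Rightarrow> 'a \<Rightarrow> bool" where
  "simplicial_vertex V E v \<longleftrightarrow> v \<in> V \<and> is_clique V E (closed_nbhd E v)"

definition simplicial_clique :: "'a set \<Rightarrow> ('a \<Rightarrow> 'a \<Rightarrow> bool) \<Rightarrow> 'a set \<Rightarrow> bool" where
  "simplicial_clique V E K \<longleftrightarrow> is_clique V E K \<and>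
     (\<exists>v. simplicial_vertex V E v \<and> K = closed_nbhd E v)"

end

theory Submission
  imports Defs
begin

lemma L1:
  assumes sg: "simple_graph V E"
    and p4: "\<forall>a b c d. induced_P4 V E a b c d \<longrightarrow> settled V E a b c d"
    and uv: "E u v" and nc: "\<And>w. E u w \<Longrightarrow> E v w \<Longrightarrow> False"
    and ux: "E u x" "x \<noteq> v" and vy: "E v y" "y \<noteq> u"
  shows "E x y"
proof (rule ccontr)
  assume nxy: "\<not> E x y"
  have sym: "\<And>a b. E a b \<Longrightarrow> E b a" and irr: "\<And>a. \<not> E a a"
    and inV: "\<And>a b. E a b \<Longrightarrow> a \<in> V \<and> b \<in> V"
    using sg unfolding simple_graph_def by auto
  have nvx: "\<not> E v x" using nc ux by blast
  have nuy: "\<not> E u y" using nc vy by blast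
  have "induced_P4 V E x u v y"
    unfolding induced_P4_def
    using inV[OF ux(1)] inV[OF vy(1)] uv ux vy nxy nvx nuy irr sym
    by auto
  then have "settled V E x u v y" using p4 by blast
  then obtain w where "E w u" "E w v" unfolding settled_def by blast
  then show False using nc sym by blast
qed

lemma L2:
  assumes sg: "simple_graph V E" and df: "diamond_free V E"
    and p4: "\<forall>a b c d. induced_P4 V E a b c d \<longrightarrow> settled V E a b c d"
    and uv: "E u v" and nc: "\<And>w. E u w \<Longrightarrow> E v w \<Longrightarrow> False"
    and vy: "E v y" "y \<noteq> u"
    and ux: "E u x" "x \<noteq> v" and ux': "E u x'" "x' \<noteq> v"
  shows "\<not> E x x'"
proof
  assume xx: "E x x'"
  have sym: "\<And>a b. E a b \<Longrightarrow> E b a" and irr: "\<And>a. \<not> E a a"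
    and inV: "\<And>a b. E a b \<Longrightarrow> a \<in> V \<and> b \<in> V"
    using sg unfolding simple_graph_def by auto
  have xy: "E x y" using L1[OF sg p4 uv nc ux vy] .
  have xy': "E x' y" using L1[OF sg p4 uv nc ux' vy] .
  have nuy: "\<not> E u y" using nc vy by blast
  have "distinct [u, x, x', y]"
    using irr xx ux ux' nuy xy xy' vy(2) by auto
  moreover have D: "\<forall>a\<in>V. \<forall>b\<in>V. \<forall>c\<in>V. \<forall>d\<in>V. \<not> (distinct [a, b, c, d] \<and>
     E a b \<and> E a c \<and> E b c \<and> E b d \<and> E c d \<and> \<not> E a d)"
    using df unfolding diamond_free_def by blast
  ultimately show False
    using bspec[OF bspec[OF bspec[OF bspec[OF D]]], of u x x' y]
      inV[OF ux(1)] inV[OF ux'(1)] inV[OF vy(1)] ux ux' xx xy xy' nuy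
    by simp
qed

lemma L3:
  assumes sg: "simple_graph V E" and df: "diamond_free V E"
    and p4: "\<forall>a b c d. induced_P4 V E a b c d \<longrightarrow> settled V E a b c d"
    and uv: "E u v" and nc: "\<And>w. E u w \<Longrightarrow> E v w \<Longrightarrow> False"
    and vy: "E v y" "y \<noteq> u"
    and uz: "E u z" and zw: "E z w"
  shows "E u w \<or> E v w"
proof (rule ccontr)
  assume nw: "\<not> (E u w \<or> E v w)"
  have sym: "\<And>a b. E a b \<Longrightarrow> E b a" and irr: "\<And>a. \<not> E a a"
    and inV: "\<And>a b. E a b \<Longrightarrow> a \<in> V \<and> b \<in> V"
    using sg unfolding simple_graph_def by auto
  have zv: "z \<noteq> v"
  proof
    assume "z = v" then have "E v w" using zw by simp
    then show False using nw by blast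
  qed
  have nvz: "\<not> E v z" using nc uz by blast
  have wu: "w \<noteq> u" using nw uv sym by blast
  have wv: "w \<noteq> v" using nw uv by blast
  have "induced_P4 V E w z u v"
    unfolding induced_P4_def
    using inV[OF uv] inV[OF uz] inV[OF zw] uv uz zw nw nvz irr sym wu wv zv
    by (auto simp: sym)
  then have "settled V E w z u v" using p4 by blast
  then obtain t where t: "E t z" "E t u" "\<not> E t v" unfolding settled_def by blast
  have tv: "t \<noteq> v" using t nvz sym by blast
  have "\<not> E t z" using L2[OF sg df p4 uv nc vy sym[OF t(2)] tv uz zv] .
  then show False using t by blast
qed

theorem lemma5:
  fixes V :: "'a set" and E :: "'a \<Rightarrow> 'a \<Rightarrow> bool"
  assumes "simple_graph V E"
    and "connected_graph V E"
    and "diamond_free V E"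
    and "\<forall>a b c d. induced_P4 V E a b c d \<longrightarrow> settled V E a b c d"
  shows "complete_bipartite V E \<or>
    (\<forall>u v. E u v \<and> maximal_clique V E {u, v} \<longrightarrow> simplicial_clique V E {u, v})"
proof (rule disjCI)
  note sg = assms(1) and df = assms(3) and p4 = assms(4)
  have sym: "\<And>a b. E a b \<Longrightarrow> E b a" and irr: "\<And>a. \<not> E a a"
    and inV: "\<And>a b. E a b \<Longrightarrow> a \<in> V \<and> b \<in> V" and fin: "finite V"
    using sg unfolding simple_graph_def by auto
  assume "\<not> (\<forall>u v. E u v \<and> maximal_clique V E {u, v} \<longrightarrow> simplicial_clique V E {u, v})"
  then obtain u v where uv: "E u v" and mc: "maximal_clique V E {u, v}"
    and ns: "\<not> simplicial_clique V E {u, v}" by blast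
  have vu: "E v u" using sym uv .
  have nc: "\<And>w. E u w \<Longrightarrow> E v w \<Longrightarrow> False"
  proof -
    fix w assume a: "E u w" "E v w"
    have "is_clique V E {u, v, w}" unfolding is_clique_def
      using inV[OF uv] inV[OF a(1)] uv a sym by auto
    then have "{u, v, w} = {u, v}" using mc unfolding maximal_clique_def by blast
    then have "w = u \<or> w = v" by blast
    then show False using a irr by blast
  qed
  have nc': "\<And>w. E v w \<Longrightarrow> E u w \<Longrightarrow> False" using nc by blast
  have clq: "is_clique V E {u, v}" using mc unfolding maximal_clique_def by blast
  have "\<exists>x. E u x \<and> x \<noteq> v"
  proof (rule ccontr)
    assume "\<not> ?thesis"
    then have cn: "closed_nbhd E u = {u, v}" unfolding closed_nbhd_def using uv by blast
    have "u \<in> V" using inV[OF uv] by blast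
    then have "simplicial_vertex V E u" unfolding simplicial_vertex_def using cn clq by simp
    then have "simplicial_clique V E {u, v}" unfolding simplicial_clique_def
      using clq cn by metis
    then show False using ns by blast
  qed
  then obtain x0 where x0: "E u x0" "x0 \<noteq> v" by blast
  have "\<exists>y. E v y \<and> y \<noteq> u"
  proof (rule ccontr)
    assume "\<not> ?thesis"
    then have cn: "closed_nbhd E v = {u, v}" unfolding closed_nbhd_def using vu by blast
    have "v \<in> V" using inV[OF uv] by blast
    then have "simplicial_vertex V E v" unfolding simplicial_vertex_def using cn clq by simp
    then have "simplicial_clique V E {u, v}" unfolding simplicial_clique_def
      using clq cn by metis
    then show False using ns by blast
  qed
  then obtain y0 where y0: "E v y0" "y0 \<noteq> u" by blast
  define A where "A = {w. E u w}"
  define B where "B = {w. E v w}"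
  have reach: "E\<^sup>*\<^sup>* u w \<Longrightarrow> w \<in> A \<union> B" for w
  proof (induction rule: rtranclp_induct)
    case base then show ?case using vu B_def by simp
  next
    case (step z w)
    show ?case
    proof (cases "z \<in> A")
      case True
      then show ?thesis using L3[OF sg df p4 uv nc y0, where z=z and w=w] step A_def B_def by auto
    next
      case False
      then have "z \<in> B" using step by blast
      then show ?thesis using L3[OF sg df p4 vu nc' x0, where z=z and w=w] step A_def B_def by auto
    qed
  qed
  have AB: "A \<union> B = V"
  proof
    show "A \<union> B \<subseteq> V" using inV A_def B_def by blast
    show "V \<subseteq> A \<union> B" using reach assms(2) inV[OF uv] unfolding connected_graph_def by blast
  qed
  have disj: "A \<inter> B = {}" using nc A_def B_def by blast
  have edges: "E x y \<longleftrightarrow> (x \<in> A \<and> y \<in> B) \<or> (x \<in> B \<and> y \<in> A)" if "x \<in> V" "y \<in> V" for x y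
  proof -
    have AA: "\<not> E a b" if "a \<in> A" "b \<in> A" for a b
    proof (cases "a = v \<or> b = v")
      case True then show ?thesis using that nc sym A_def by blast
    next
      case False show ?thesis by (rule L2[OF sg df p4 uv nc y0]) (use that A_def False in auto)
    qed
    have BB: "\<not> E a b" if "a \<in> B" "b \<in> B" for a b
    proof (cases "a = u \<or> b = u")
      case True then show ?thesis using that nc sym B_def by blast
    next
      case False show ?thesis by (rule L2[OF sg df p4 vu nc' x0]) (use that B_def False in auto)
    qed
    have AB': "E a b" if "a \<in> A" "b \<in> B" for a b
    proof (cases "a = v \<or> b = u")
      case True then show ?thesis using that sym A_def B_def by blast
    next
      case False show ?thesis by (rule L1[OF sg p4 uv nc]) (use that A_def B_def False in auto)
    qed
    have xAB: "x \<in> A \<or> x \<in> B" and yAB: "y \<in> A \<or> y \<in> B" using that AB by blast+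
    have nAB: "\<And>z. z \<in> A \<Longrightarrow> z \<notin> B" using disj by blast
    show ?thesis
    proof (cases "x \<in> A")
      case xa: True
      show ?thesis
      proof (cases "y \<in> A")
        case True then show ?thesis using xa AA[OF xa] nAB by blast
      next
        case False then have "y \<in> B" using yAB by blast
        then show ?thesis using xa AB'[OF xa] by blast
      qed
    next
      case xa: False
      then have xb: "x \<in> B" using xAB by blast
      show ?thesis
      proof (cases "y \<in> A")
        case True then show ?thesis using xb AB'[OF True xb] sym xa by blast
      next
        case False then have "y \<in> B" using yAB by blast
        then show ?thesis using xb BB[OF xb] False xa by blast
      qed
    qed
  qed
  have "x0 \<in> A" "y0 \<in> B" using x0 y0 A_def B_def by auto
  then have "A \<noteq> {}" "B \<noteq> {}" by auto
  then show "complete_bipartite V E" unfolding complete_bipartite_def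
    using AB disj edges by blast
qed

end
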